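(* Let $K,n\in\mathbb{N}^*$ and $\mu\in H^3((0,1),\mathbb{R})$ with $\sum_jj^{4n}|c_j|<\infty$ and $A^n_K\neq0$. There exists $T^*>0$ such that for every $T\in(0,T^* )$ and every real $s\in L^2(0,T)$, $-\operatorname{sign}(A^n_K)Q_n(s)\ge\frac{|A^n_K|}4\int_0^Ts(t)^2dt$, where $$Q_n(s)=-A^n_K\int_0^Ts(t)^2\cos[(\lambda_K-\lambda_1)(t-T)]dt+\int_0^Ts(t)\int_0^ts(\tau)k_n(t,\tau)d\tau dt,$$ $$k_n(t,\tau)=(-1)^{n+1}\sum_{j\ge1}(\lambda_K-\lambda_j)^n(\lambda_j-\lambda_1)^nc_j\sin\big(\lambda_K(t-T)+\lambda_j(\tau-t)+\lambda_1(T-\tau)\big).$$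
   Context: $\varphi_j=\sqrt2\sin(j\pi x)$, $\lambda_j=(j\pi)^2$, $\langle f,g\rangle=\int_0^1f\bar g$, $c_j=\langle\mu\varphi_1,\varphi_j\rangle\langle\mu\varphi_K,\varphi_j\rangle$, $A^n_K=(-1)^{n-1}\sum_{j}(\lambda_j-\frac{\lambda_1+\lambda_K}2)(\lambda_K-\lambda_j)^{n-1}(\lambda_j-\lambda_1)^{n-1}c_j$. *)

theory Defs
  imports "HOL-Analysis.Analysis"
begin

text \<open>Eigenfunctions and eigenvalues of the Dirichlet Laplacian on (0,1).\<close>
definition phi :: "nat \<Rightarrow> real \<Rightarrow> real" where
  "phi j x = sqrt 2 * sin (real j * pi * x)"

definition lam :: "nat \<Rightarrow> real" where
  "lam j = (real j * pi)^2"

definition ip01 :: "(real \<Rightarrow> real) \<Rightarrow> (real \<Rightarrow> real) \<Rightarrow> real" where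
  "ip01 f g = integral\<^sup>L (lebesgue_on {0..1}) (\<lambda>x. f x * g x)"

text \<open>Sobolev space H^3((0,1),R), via the continuous representative:
  mu, mu', mu'' absolutely continuous with mu''' in L^2(0,1).\<close>
definition H3_01 :: "(real \<Rightarrow> real) \<Rightarrow> bool" where
  "H3_01 mu \<longleftrightarrow> (\<exists>f1 f2 f3.
      f3 \<in> borel_measurable (lebesgue_on {0..1}) \<and>
      integrable (lebesgue_on {0..1}) (\<lambda>x. (f3 x)^2) \<and>
      (\<forall>x\<in>{0..1}.
         mu x = mu 0 + integral\<^sup>L (lebesgue_on {0..x}) f1 \<and>
         f1 x = f1 0 + integral\<^sup>L (lebesgue_on {0..x}) f2 \<and>
         f2 x = f2 0 + integral\<^sup>L (lebesgue_on {0..x}) f3))"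

definition cc :: "(real \<Rightarrow> real) \<Rightarrow> nat \<Rightarrow> nat \<Rightarrow> real" where
  "cc mu K j = ip01 (\<lambda>x. mu x * phi 1 x) (phi j) * ip01 (\<lambda>x. mu x * phi K x) (phi j)"

text \<open>A^n_K; the series runs over j \<ge> 1 (index shifted by Suc).\<close>
definition AnK :: "(real \<Rightarrow> real) \<Rightarrow> nat \<Rightarrow> nat \<Rightarrow> real" where
  "AnK mu n K = (-1)^(n-1) * (\<Sum>i. let j = Suc i in
      (lam j - (lam 1 + lam K) / 2) * (lam K - lam j)^(n-1) * (lam j - lam 1)^(n-1) * cc mu K j)"

definition kern :: "(real \<Rightarrow> real) \<Rightarrow> nat \<Rightarrow> nat \<Rightarrow> real \<Rightarrow> real \<Rightarrow> real \<Rightarrow> real" where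
  "kern mu n K T t \<tau> = (-1)^(n+1) * (\<Sum>i. let j = Suc i in
      (lam K - lam j)^n * (lam j - lam 1)^n * cc mu K j *
      sin (lam K * (t - T) + lam j * (\<tau> - t) + lam 1 * (T - \<tau>)))"

definition Qn :: "(real \<Rightarrow> real) \<Rightarrow> nat \<Rightarrow> nat \<Rightarrow> real \<Rightarrow> (real \<Rightarrow> real) \<Rightarrow> real" where
  "Qn mu n K T s =
     - AnK mu n K * integral\<^sup>L (lebesgue_on {0..T})
         (\<lambda>t. (s t)^2 * cos ((lam K - lam 1) * (t - T)))
     + integral\<^sup>L (lebesgue_on {0..T})
         (\<lambda>t. s t * integral\<^sup>L (lebesgue_on {0..t}) (\<lambda>\<tau>. s \<tau> * kern mu n K T t \<tau>))"

end

theory Submission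
  imports Defs
begin

lemma lam_nonneg: "lam j \<ge> 0" by (simp add: lam_def)

lemma lam_mono: "i \<le> j \<Longrightarrow> lam i \<le> lam j"
  unfolding lam_def by (intro power_mono mult_right_mono) auto

lemma term_bound:
  fixes c :: real
  shows "\<bar>(lam K - lam (Suc i))^n * (lam (Suc i) - lam 1)^n * c\<bar>
     \<le> (pi^4 * (real K^2 + 1))^n * (real (Suc i) ^ (4*n) * \<bar>c\<bar>)"
proof -
  let ?j = "real (Suc i)"
  have j1: "?j \<ge> 1" by simp
  have h1: "\<bar>lam K - lam (Suc i)\<bar> \<le> pi^2 * (real K^2 + 1) * ?j^2"
  proof -
    have "\<bar>lam K - lam (Suc i)\<bar> \<le> lam K + lam (Suc i)"
      using lam_nonneg[of K] lam_nonneg[of "Suc i"] by linarith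
    also have "\<dots> = pi^2 * (real K^2 + ?j^2)" by (simp only: lam_def power_mult_distrib) (simp add: algebra_simps)
    also have "\<dots> \<le> pi^2 * (real K^2 + 1) * ?j^2"
    proof -
      have "real K^2 \<le> real K^2 * ?j^2" using j1
        by (metis mult_cancel_left1 mult_left_mono of_nat_0_le_iff one_le_power zero_le_power2)
      then show ?thesis by (simp add: algebra_simps)
    qed
    finally show ?thesis .
  qed
  have h2: "\<bar>lam (Suc i) - lam 1\<bar> \<le> pi^2 * ?j^2"
  proof -
    have "lam 1 \<le> lam (Suc i)" by (rule lam_mono) simp
    then have "\<bar>lam (Suc i) - lam 1\<bar> \<le> lam (Suc i)" using lam_nonneg[of 1] by linarith
    then show ?thesis by (simp only: lam_def power_mult_distrib) (simp add: algebra_simps)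
  qed
  have "\<bar>(lam K - lam (Suc i))^n * (lam (Suc i) - lam 1)^n * c\<bar>
      = \<bar>lam K - lam (Suc i)\<bar>^n * \<bar>lam (Suc i) - lam 1\<bar>^n * \<bar>c\<bar>"
    by (simp add: abs_mult power_abs)
  also have "\<dots> \<le> (pi^2 * (real K^2 + 1) * ?j^2)^n * (pi^2 * ?j^2)^n * \<bar>c\<bar>"
    by (intro mult_right_mono mult_mono power_mono h1 h2) auto
  also have "\<dots> = (pi^4 * (real K^2 + 1))^n * (?j ^ (4*n) * \<bar>c\<bar>)"
  proof -
    have "(pi^2 * (real K^2 + 1) * ?j^2) * (pi^2 * ?j^2) = (pi^4 * (real K^2 + 1)) * ?j^4"
      by (simp add: algebra_simps power2_eq_square power4_eq_xxxx)
    then have "(pi^2 * (real K^2 + 1) * ?j^2)^n * (pi^2 * ?j^2)^n = (pi^4 * (real K^2 + 1))^n * (?j^4)^n"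
      by (metis power_mult_distrib)
    then show ?thesis by (simp add: power_mult[symmetric] mult.commute mult.left_commute)
  qed
  finally show ?thesis .
qed

lemma kern_bound:
  assumes sm: "summable (\<lambda>i. real (Suc i) ^ (4 * n) * \<bar>cc mu K (Suc i)\<bar>)"
  shows "\<bar>kern mu n K T t \<tau>\<bar> \<le> (pi^4 * (real K^2 + 1))^n * (\<Sum>i. real (Suc i) ^ (4 * n) * \<bar>cc mu K (Suc i)\<bar>)"
proof -
  define C where "C = (pi^4 * (real K^2 + 1))^n"
  define b where "b i = real (Suc i) ^ (4 * n) * \<bar>cc mu K (Suc i)\<bar>" for i
  define f where "f = (\<lambda>i. let j = Suc i in
      (lam K - lam j)^n * (lam j - lam 1)^n * cc mu K j *
      sin (lam K * (t - T) + lam j * (\<tau> - t) + lam 1 * (T - \<tau>)))"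
  have fb: "\<bar>f i\<bar> \<le> C * b i" for i
  proof -
    let ?x = "lam K * (t - T) + lam (Suc i) * (\<tau> - t) + lam 1 * (T - \<tau>)"
    have "\<bar>f i\<bar> = \<bar>(lam K - lam (Suc i))^n * (lam (Suc i) - lam 1)^n * cc mu K (Suc i)\<bar> * \<bar>sin ?x\<bar>"
      by (simp add: f_def Let_def abs_mult)
    also have "\<dots> \<le> \<bar>(lam K - lam (Suc i))^n * (lam (Suc i) - lam 1)^n * cc mu K (Suc i)\<bar>"
      by (intro mult_left_le) auto
    also have "\<dots> \<le> C * b i" unfolding C_def b_def by (rule term_bound)
    finally show ?thesis .
  qed
  have sb: "summable (\<lambda>i. C * b i)" using sm unfolding b_def by (intro summable_mult)
  have sf: "summable (\<lambda>i. \<bar>f i\<bar>)"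
    by (rule summable_comparison_test[OF _ sb]) (use fb in auto)
  have "\<bar>kern mu n K T t \<tau>\<bar> = \<bar>suminf f\<bar>"
    unfolding kern_def f_def by (simp add: abs_mult)
  also have "\<dots> \<le> (\<Sum>i. \<bar>f i\<bar>)" by (rule summable_rabs[OF sf])
  also have "\<dots> \<le> (\<Sum>i. C * b i)" by (rule suminf_le[OF fb sf sb])
  also have "\<dots> = C * (\<Sum>i. b i)" using sm unfolding b_def by (rule suminf_mult)
  finally show ?thesis unfolding C_def b_def .
qed

lemma cos_half: "\<bar>x\<bar> \<le> 1 \<Longrightarrow> cos (x::real) \<ge> 1/2"
proof -
  assume a: "\<bar>x\<bar> \<le> 1"
  have "cos (pi/3) \<le> cos \<bar>x\<bar>" by (rule cos_monotone_0_pi_le) (use a pi_gt3 in auto)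
  then show ?thesis by (simp add: cos_60)
qed

lemma L1_sq:
  fixes s :: "real \<Rightarrow> real"
  assumes T: "T > 0" and sm: "s \<in> borel_measurable (lebesgue_on {0..T})"
    and si: "integrable (lebesgue_on {0..T}) (\<lambda>t. (s t)^2)"
  shows "integrable (lebesgue_on {0..T}) (\<lambda>t. \<bar>s t\<bar>)"
    and "(integral\<^sup>L (lebesgue_on {0..T}) (\<lambda>t. \<bar>s t\<bar>))^2 \<le> T * integral\<^sup>L (lebesgue_on {0..T}) (\<lambda>t. (s t)^2)"
proof -
  let ?M = "lebesgue_on {0..T}"
  have am: "(\<lambda>t. \<bar>s t\<bar>) \<in> borel_measurable ?M" using sm by (rule borel_measurable_abs)
  have i1: "integrable ?M (\<lambda>t. (s t)^2 + 1)" using si by simp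
  show ai: "integrable ?M (\<lambda>t. \<bar>s t\<bar>)"
  proof (rule Bochner_Integration.integrable_bound[OF i1 am])
    show "AE x in ?M. norm \<bar>s x\<bar> \<le> norm ((s x)^2 + 1)"
    proof (intro AE_I2)
      fix x
      have "\<bar>s x\<bar> \<le> (s x)^2 + 1"
      proof (cases "\<bar>s x\<bar> \<le> 1")
        case True then show ?thesis by (smt (verit) zero_le_power2)
      next
        case False then have "\<bar>s x\<bar> * 1 \<le> \<bar>s x\<bar> * \<bar>s x\<bar>" by (intro mult_left_mono) auto
        then show ?thesis by (simp add: power2_eq_square)
      qed
      then show "norm \<bar>s x\<bar> \<le> norm ((s x)^2 + 1)" by simp
    qed
  qed
  define I where "I = integral\<^sup>L ?M (\<lambda>t. \<bar>s t\<bar>)"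
  define S where "S = integral\<^sup>L ?M (\<lambda>t. (s t)^2)"
  have S0: "S \<ge> 0" unfolding S_def by (rule integral_nonneg_AE) auto
  have I0: "I \<ge> 0" unfolding I_def by (rule integral_nonneg_AE) auto
  have key: "2 * a * I \<le> S + a^2 * T" if a: "a > 0" for a
  proof -
    have "2 * a * I = integral\<^sup>L ?M (\<lambda>t. 2 * a * \<bar>s t\<bar>)" unfolding I_def by simp
    also have "\<dots> \<le> integral\<^sup>L ?M (\<lambda>t. (s t)^2 + a^2)"
    proof (rule integral_mono)
      show "integrable ?M (\<lambda>t. 2 * a * \<bar>s t\<bar>)" using ai by simp
      show "integrable ?M (\<lambda>t. (s t)^2 + a^2)" using si by simp
      fix t
      have "0 \<le> (\<bar>s t\<bar> - a)^2" by simp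
      then show "2 * a * \<bar>s t\<bar> \<le> (s t)^2 + a^2" by (simp add: power2_eq_square algebra_simps)
    qed
    also have "\<dots> = S + a^2 * T" unfolding S_def using si T
      by (simp add: measure_restrict_space)
    finally show ?thesis .
  qed
  show "I^2 \<le> T * S"
  proof (cases "I = 0")
    case True then show ?thesis using S0 T by simp
  next
    case False
    then have Ip: "I > 0" using I0 by simp
    have "2 * (I/T) * I \<le> S + (I/T)^2 * T" using key[of "I/T"] Ip T by simp
    then have "2 * I^2 / T \<le> S + I^2 / T" using T by (simp add: power2_eq_square field_simps)
    then have "I^2 / T \<le> S" by simp
    then show ?thesis using T by (simp add: field_simps)
  qed
qed

theorem lemma5p2:
  fixes mu :: "real \<Rightarrow> real" and K n :: nat
  assumes "K \<ge> 1" and "n \<ge> 1"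
    and "H3_01 mu"
    and "summable (\<lambda>i. real (Suc i) ^ (4 * n) * \<bar>cc mu K (Suc i)\<bar>)"
    and "AnK mu n K \<noteq> 0"
  shows "\<exists>Tstar > 0. \<forall>T. 0 < T \<and> T < Tstar \<longrightarrow>
           (\<forall>s :: real \<Rightarrow> real.
              s \<in> borel_measurable (lebesgue_on {0..T}) \<and>
              integrable (lebesgue_on {0..T}) (\<lambda>t. (s t)^2) \<longrightarrow>
              - sgn (AnK mu n K) * Qn mu n K T s \<ge>
                \<bar>AnK mu n K\<bar> / 4 * integral\<^sup>L (lebesgue_on {0..T}) (\<lambda>t. (s t)^2))"
proof -
  define A where "A = AnK mu n K"
  define B where "B = (pi^4 * (real K^2 + 1))^n * (\<Sum>i. real (Suc i) ^ (4 * n) * \<bar>cc mu K (Suc i)\<bar>)"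
  define d where "d = lam K - lam 1"
  have kb: "\<And>T t \<tau>. \<bar>kern mu n K T t \<tau>\<bar> \<le> B" unfolding B_def by (rule kern_bound[OF assms(4)])
  have B0: "B \<ge> 0" using kb[of 0 0 0] by linarith
  have Ap: "\<bar>A\<bar> > 0" using assms(5) A_def by simp
  define Ts where "Ts = min (1 / (\<bar>d\<bar> + 1)) (\<bar>A\<bar> / (4 * (B + 1)))"
  have Tsp: "Ts > 0" unfolding Ts_def using Ap B0 by (simp add: abs_ge_zero add_nonneg_pos)
  show ?thesis
  proof (intro exI[of _ Ts] conjI allI impI Tsp)
    fix T :: real and s :: "real \<Rightarrow> real"
    assume TT: "0 < T \<and> T < Ts"
    then have T0: "T > 0" and TA: "T < \<bar>A\<bar> / (4 * (B + 1))" and Td: "T < 1 / (\<bar>d\<bar> + 1)"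
      unfolding Ts_def by auto
    assume ss: "s \<in> borel_measurable (lebesgue_on {0..T}) \<and> integrable (lebesgue_on {0..T}) (\<lambda>t. (s t)^2)"
    then have sm[measurable]: "s \<in> borel_measurable (lebesgue_on {0..T})"
      and si: "integrable (lebesgue_on {0..T}) (\<lambda>t. (s t)^2)" by auto
    let ?M = "lebesgue_on {0..T}"
    define S where "S = integral\<^sup>L ?M (\<lambda>t. (s t)^2)"
    define I where "I = integral\<^sup>L ?M (\<lambda>t. \<bar>s t\<bar>)"
    define J where "J = integral\<^sup>L ?M (\<lambda>t. (s t)^2 * cos (d * (t - T)))"
    define g where "g t = integral\<^sup>L (lebesgue_on {0..t}) (\<lambda>\<tau>. s \<tau> * kern mu n K T t \<tau>)" for t
    define X where "X = integral\<^sup>L ?M (\<lambda>t. s t * g t)"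
    have ai: "integrable ?M (\<lambda>t. \<bar>s t\<bar>)" by (rule L1_sq(1)[OF T0 sm si])
    have I2: "I^2 \<le> T * S" unfolding I_def S_def by (rule L1_sq(2)[OF T0 sm si])
    have S0: "S \<ge> 0" unfolding S_def by (rule integral_nonneg_AE) auto
    have I0: "I \<ge> 0" unfolding I_def by (rule integral_nonneg_AE) auto
    have Qeq: "Qn mu n K T s = - A * J + X"
      unfolding Qn_def A_def J_def X_def g_def d_def by simp
    have cosb: "cos (d * (t - T)) \<ge> 1/2" if t: "t \<in> {0..T}" for t
    proof (rule cos_half)
      have "\<bar>d * (t - T)\<bar> = \<bar>d\<bar> * \<bar>t - T\<bar>" by (simp add: abs_mult)
      also have "\<dots> \<le> \<bar>d\<bar> * T" using t by (intro mult_left_mono) auto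
      also have "\<dots> \<le> (\<bar>d\<bar> + 1) * T" using T0 by simp
      also have "\<dots> \<le> 1" using Td by (simp add: field_simps)
      finally show "\<bar>d * (t - T)\<bar> \<le> 1" .
    qed
    have ci: "integrable ?M (\<lambda>t. (s t)^2 * cos (d * (t - T)))"
    proof (rule Bochner_Integration.integrable_bound[OF si])
      show "(\<lambda>t. (s t)^2 * cos (d * (t - T))) \<in> borel_measurable ?M"
      proof -
        have "(\<lambda>t. cos (d * (t - T))) \<in> borel_measurable ?M"
          by (rule continuous_imp_measurable_on_sets_lebesgue) (auto intro!: continuous_intros)
        then show ?thesis by measurable
      qed
      show "AE x in ?M. norm ((s x)^2 * cos (d * (x - T))) \<le> norm ((s x)^2)"
        by (intro AE_I2) (simp add: abs_mult mult_left_le)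
    qed
    have JS: "J \<ge> S / 2"
    proof -
      have "S / 2 = integral\<^sup>L ?M (\<lambda>t. (s t)^2 * (1/2))" unfolding S_def by simp
      also have "\<dots> \<le> J" unfolding J_def
      proof (rule integral_mono)
        fix t assume "t \<in> space ?M"
        then have "cos (d * (t - T)) \<ge> 1/2" using cosb by simp
        then show "(s t)^2 * (1/2) \<le> (s t)^2 * cos (d * (t - T))"
          by (intro mult_left_mono) auto
      qed (use si ci in auto)
      finally show ?thesis .
    qed
    have gb: "\<bar>g t\<bar> \<le> B * I" if t: "t \<in> {0..T}" for t
    proof -
      have "\<bar>g t\<bar> \<le> integral\<^sup>L (lebesgue_on {0..t}) (\<lambda>\<tau>. \<bar>s \<tau> * kern mu n K T t \<tau>\<bar>)"
        unfolding g_def using integral_norm_bound[of "lebesgue_on {0..t}" "\<lambda>\<tau>. s \<tau> * kern mu n K T t \<tau>"]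
        by simp
      also have "\<dots> \<le> integral\<^sup>L ?M (\<lambda>\<tau>. B * \<bar>s \<tau>\<bar>)"
      proof (rule integral_mono_lebesgue_on_AE)
        show "integrable ?M (\<lambda>\<tau>. B * \<bar>s \<tau>\<bar>)" using ai by simp
        show "AE x in lebesgue_on {0..t}. \<bar>s x * kern mu n K T t x\<bar> \<le> B * \<bar>s x\<bar>"
          by (intro AE_I2) (metis abs_ge_zero abs_mult kb mult.commute mult_left_mono)
        show "AE x in ?M. 0 \<le> B * \<bar>s x\<bar>" using B0 by simp
        show "{0..t} \<subseteq> {0..T}" using t by auto
      qed auto
      also have "\<dots> = B * I" unfolding I_def by simp
      finally show ?thesis .
    qed
    have XB: "\<bar>X\<bar> \<le> B * I * I"
    proof (cases "integrable ?M (\<lambda>t. s t * g t)")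
      case True
      have "norm X \<le> integral\<^sup>L ?M (\<lambda>t. \<bar>s t\<bar> * (B * I))"
        unfolding X_def
      proof (rule Bochner_Integration.integral_norm_bound_integral[OF True])
        show "integrable ?M (\<lambda>t. \<bar>s t\<bar> * (B * I))" using ai by simp
        fix t assume "t \<in> space ?M"
        then have "t \<in> {0..T}" by simp
        then show "norm (s t * g t) \<le> \<bar>s t\<bar> * (B * I)"
          using gb by (simp add: abs_mult mult_left_mono)
      qed
      also have "\<dots> = B * I * I" unfolding I_def by simp
      finally show ?thesis by simp
    next
      case False
      then have "X = 0" unfolding X_def by (rule not_integrable_integral_eq)
      then show ?thesis using B0 I0 by simp
    qed
    have BT: "B * T \<le> \<bar>A\<bar> / 4"
    proof -
      have "B * T \<le> (B + 1) * T" using T0 by simp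
      also have "\<dots> \<le> \<bar>A\<bar> / 4" using TA B0 by (simp add: field_simps)
      finally show ?thesis .
    qed
    have XS: "\<bar>X\<bar> \<le> \<bar>A\<bar> / 4 * S"
    proof -
      have "B * I * I = B * I^2" by (simp add: power2_eq_square)
      also have "\<dots> \<le> B * (T * S)" using I2 B0 by (rule mult_left_mono)
      also have "\<dots> = (B * T) * S" by simp
      also have "\<dots> \<le> \<bar>A\<bar> / 4 * S" using BT S0 by (rule mult_right_mono)
      finally show ?thesis using XB by linarith
    qed
    have sA: "sgn A * A = \<bar>A\<bar>" by (simp add: sgn_mult_self_eq abs_sgn)
    have "- sgn A * (- A * J + X) = \<bar>A\<bar> * J - sgn A * X" using sA by (simp add: algebra_simps)
    moreover have "\<bar>sgn A * X\<bar> \<le> \<bar>X\<bar>" by (simp add: abs_mult abs_sgn_eq)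
    moreover have "\<bar>A\<bar> * J \<ge> \<bar>A\<bar> * (S / 2)" using JS by (intro mult_left_mono) auto
    moreover have "\<bar>A\<bar> * (S / 2) = 2 * (\<bar>A\<bar> / 4 * S)" by simp
    moreover have "- (sgn A * X) \<le> \<bar>sgn A * X\<bar>" by (rule abs_ge_minus_self)
    ultimately have "- sgn A * (- A * J + X) \<ge> \<bar>A\<bar> / 4 * S" using XS by linarith
    then show "- sgn (AnK mu n K) * Qn mu n K T s \<ge>
                \<bar>AnK mu n K\<bar> / 4 * integral\<^sup>L (lebesgue_on {0..T}) (\<lambda>t. (s t)^2)"
      using Qeq unfolding A_def S_def by simp
  qed
qed

end
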